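(* Every packet name $\dot x_{\mathfrak S}$ arising from a rank-$1$ packet scheme $\mathfrak S=(A,\langle\mathcal C_m:m<\omega\rangle)$ is hereditarily symmetric and is supported by $A$.
   Context: $\rho:\omega_1\setminus\{0\}\to\omega_1$ is the generic regressive map added by finite partial regressive functions; $\operatorname{Succ}_\rho(\xi)=\{\eta:\rho(\eta)=\xi\}$; $A$ is $\rho$-closed if closed under $\rho$, $\operatorname{cl}_\rho(A)$ the least $\rho$-closed superset. $\mathbb P_1=\operatorname{Fn}(\omega_1\times\omega\times\omega,2,{<}\omega)$. For $\xi<\omega_1,i<\omega$, $s\subseteq\omega$ finite or cofinite, $\tau^{\mathrm{1cas}}_{\xi,i,s}$ flips the value of a condition at each coordinate $(\zeta,i,n)$ with $n\in s$ and $\zeta\in\{\xi\}\cup\operatorname{Succ}_\rho(\xi)$; $\mathscr G^{\mathrm{1cas}}_\rho$ is the group they generate; $\operatorname{Fix}^{\mathrm{1cas}}_\rho(A)$ is the subgroup acting trivially on coordinates $(\zeta,j,n)$ with $\zeta\in\operatorname{cl}_\rho(A)$; $\mathscr F^{\mathrm{1cas}}_\rho$ is the filter of subgroups generated by these for countable $A$; hereditarily symmetric names are taken with respect to $(\mathbb P_1,\mathscr G^{\mathrm{1cas}}_\rho,\mathscr F^{\mathrm{1cas}}_\rho)$, and a name is supported by $A$ if fixed by $\operatorname{Fix}^{\mathrm{1cas}}_\rho(A)$. An exact finite cascade packet is a condition $r\in\mathbb P_1$ whose node-support $\{\xi:\exists i,n\ r(\xi,i,n)\text{ defined}\}$ is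 finite and $\rho$-closed. A rank-$1$ packet scheme is a pair $\mathfrak S=(A,\langle\mathcal C_m:m<\omega\rangle)$ with $A\subseteq\omega_1$ countable and $\rho$-closed and each $\mathcal C_m$ a countable family of exact finite cascade packets with node-support contained in $A$; its name is $\dot x_{\mathfrak S}=\{(\check m,r):m<\omega,\ r\in\mathcal C_m\}$. *)

theory Defs
  imports Main "HOL-Library.Countable_Set_Type"
begin

text \<open>omega_1 is modelled by a well-ordered type 'w that is uncountable but all of
whose proper initial segments are countable. Its least element plays the role of 0.\<close>

definition omega1_like :: "'w::wellorder itself \<Rightarrow> bool" where
  "omega1_like _ \<longleftrightarrow> \<not> countable (UNIV :: 'w set) \<and> (\<forall>\<xi>::'w. countable {\<eta>. \<eta> < \<xi>})"

definition zero_ord :: "'w::wellorder" where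
  "zero_ord = (LEAST x. True)"

text \<open>rho is only meaningful on omega_1 minus {0}; its value at 0 is ignored everywhere.\<close>
definition regressive :: "('w::wellorder \<Rightarrow> 'w) \<Rightarrow> bool" where
  "regressive \<rho> \<longleftrightarrow> (\<forall>\<xi>. \<xi> \<noteq> zero_ord \<longrightarrow> \<rho> \<xi> < \<xi>)"

definition Succ :: "('w::wellorder \<Rightarrow> 'w) \<Rightarrow> 'w \<Rightarrow> 'w set" where
  "Succ \<rho> \<xi> = {\<eta>. \<eta> \<noteq> zero_ord \<and> \<rho> \<eta> = \<xi>}"

definition rho_closed :: "('w::wellorder \<Rightarrow> 'w) \<Rightarrow> 'w set \<Rightarrow> bool" where
  "rho_closed \<rho> A \<longleftrightarrow> (\<forall>\<eta>\<in>A. \<eta> \<noteq> zero_ord \<longrightarrow> \<rho> \<eta> \<in> A)"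

definition cl_rho :: "('w::wellorder \<Rightarrow> 'w) \<Rightarrow> 'w set \<Rightarrow> 'w set" where
  "cl_rho \<rho> A = \<Inter>{B. A \<subseteq> B \<and> rho_closed \<rho> B}"

type_synonym 'w cond = "'w \<times> nat \<times> nat \<Rightarrow> bool option"

definition P1 :: "'w cond set" where
  "P1 = {p. finite (dom p)}"

definition one_cond :: "'w cond" where
  "one_cond = Map.empty"

definition tau1cas :: "('w::wellorder \<Rightarrow> 'w) \<Rightarrow> 'w \<Rightarrow> nat \<Rightarrow> nat set \<Rightarrow> 'w cond \<Rightarrow> 'w cond" where
  "tau1cas \<rho> \<xi> i s p = (\<lambda>(\<zeta>, j, n).
      if j = i \<and> n \<in> s \<and> \<zeta> \<in> insert \<xi> (Succ \<rho> \<xi>)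
      then map_option Not (p (\<zeta>, j, n)) else p (\<zeta>, j, n))"

definition gens1cas :: "('w::wellorder \<Rightarrow> 'w) \<Rightarrow> ('w cond \<Rightarrow> 'w cond) set" where
  "gens1cas \<rho> = {tau1cas \<rho> \<xi> i s | \<xi> i s. finite s \<or> finite (- s)}"

inductive_set G1cas :: "('w::wellorder \<Rightarrow> 'w) \<Rightarrow> ('w cond \<Rightarrow> 'w cond) set"
  for \<rho> where
  gen: "\<tau> \<in> gens1cas \<rho> \<Longrightarrow> \<tau> \<in> G1cas \<rho>"
| ident: "id \<in> G1cas \<rho>"
| comp: "\<pi> \<in> G1cas \<rho> \<Longrightarrow> \<sigma> \<in> G1cas \<rho> \<Longrightarrow> \<pi> \<circ> \<sigma> \<in> G1cas \<rho>"
| inverse: "\<pi> \<in> G1cas \<rho> \<Longrightarrow> inv \<pi> \<in> G1cas \<rho>"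

definition Fix1cas :: "('w::wellorder \<Rightarrow> 'w) \<Rightarrow> 'w set \<Rightarrow> ('w cond \<Rightarrow> 'w cond) set" where
  "Fix1cas \<rho> A = {\<pi> \<in> G1cas \<rho>. \<forall>p \<zeta> j n. \<zeta> \<in> cl_rho \<rho> A \<longrightarrow> \<pi> p (\<zeta>, j, n) = p (\<zeta>, j, n)}"

definition is_subgroup :: "('w::wellorder \<Rightarrow> 'w) \<Rightarrow> ('w cond \<Rightarrow> 'w cond) set \<Rightarrow> bool" where
  "is_subgroup \<rho> H \<longleftrightarrow> H \<subseteq> G1cas \<rho> \<and> id \<in> H \<and> (\<forall>\<pi>\<in>H. \<forall>\<sigma>\<in>H. \<pi> \<circ> \<sigma> \<in> H)
     \<and> (\<forall>\<pi>\<in>H. inv \<pi> \<in> H)"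

definition F1cas :: "('w::wellorder \<Rightarrow> 'w) \<Rightarrow> ('w cond \<Rightarrow> 'w cond) set set" where
  "F1cas \<rho> = {H. is_subgroup \<rho> H \<and>
      (\<exists>As. finite As \<and> (\<forall>A\<in>As. countable A) \<and> G1cas \<rho> \<inter> \<Inter>(Fix1cas \<rho> ` As) \<subseteq> H)}"

text \<open>Names whose elements form countable sets (sufficient for the names considered:
hereditary symmetry only depends on the transitive closure of a name).\<close>
datatype 'c name = Name (elts: "('c name \<times> 'c) cset")

primrec act :: "('c \<Rightarrow> 'c) \<Rightarrow> 'c name \<Rightarrow> 'c name" where
  "act \<pi> (Name X) = Name (cimage (map_prod (act \<pi>) \<pi>) X)"

definition symmetric_name :: "('w::wellorder \<Rightarrow> 'w) \<Rightarrow> 'w cond name \<Rightarrow> bool" where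
  "symmetric_name \<rho> x \<longleftrightarrow> {\<pi> \<in> G1cas \<rho>. act \<pi> x = x} \<in> F1cas \<rho>"

inductive HS :: "('w::wellorder \<Rightarrow> 'w) \<Rightarrow> 'w cond name \<Rightarrow> bool" for \<rho> where
  "symmetric_name \<rho> x \<Longrightarrow> (\<forall>(y, p) \<in> rcset (elts x). p \<in> P1 \<and> HS \<rho> y) \<Longrightarrow> HS \<rho> x"

definition supported_by :: "('w::wellorder \<Rightarrow> 'w) \<Rightarrow> 'w set \<Rightarrow> 'w cond name \<Rightarrow> bool" where
  "supported_by \<rho> A x \<longleftrightarrow> (\<forall>\<pi> \<in> Fix1cas \<rho> A. act \<pi> x = x)"

primrec check_nat :: "nat \<Rightarrow> 'w cond name" where
  "check_nat 0 = Name cempty"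
| "check_nat (Suc n) = Name (cinsert (check_nat n, one_cond) (elts (check_nat n)))"

definition node_support :: "'w cond \<Rightarrow> 'w set" where
  "node_support r = {\<xi>. \<exists>i n. r (\<xi>, i, n) \<noteq> None}"

definition exact_packet :: "('w::wellorder \<Rightarrow> 'w) \<Rightarrow> 'w cond \<Rightarrow> bool" where
  "exact_packet \<rho> r \<longleftrightarrow> r \<in> P1 \<and> finite (node_support r) \<and> rho_closed \<rho> (node_support r)"

definition rank1_scheme :: "('w::wellorder \<Rightarrow> 'w) \<Rightarrow> 'w set \<Rightarrow> (nat \<Rightarrow> 'w cond set) \<Rightarrow> bool" where
  "rank1_scheme \<rho> A C \<longleftrightarrow> countable A \<and> rho_closed \<rho> A \<and>
     (\<forall>m. countable (C m) \<and> (\<forall>r \<in> C m. exact_packet \<rho> r \<and> node_support r \<subseteq> A))"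

definition scheme_name :: "(nat \<Rightarrow> 'w cond set) \<Rightarrow> 'w cond name" where
  "scheme_name C = Name (acset (\<Union>m. (\<lambda>r. (check_nat m, r)) ` C m))"

end

theory Submission
  imports Defs
begin

definition flip :: "('w \<times> nat \<times> nat) set \<Rightarrow> 'w cond \<Rightarrow> 'w cond" where
  "flip S p = (\<lambda>x. if x \<in> S then map_option Not (p x) else p x)"

lemma flip_comp: "flip S \<circ> flip T = flip ((S - T) \<union> (T - S))"
  by (rule ext, rule ext) (auto simp: flip_def option.map_comp o_def option.map_ident)

lemma flip_invol: "flip S \<circ> flip S = id"
  by (rule ext, rule ext) (auto simp: flip_def option.map_comp o_def option.map_ident)

lemma flip_inv: "inv (flip S) = flip S"
  by (metis flip_invol inv_unique_comp)

lemma G1cas_flip: "\<pi> \<in> G1cas \<rho> \<Longrightarrow> \<exists>S. \<pi> = flip S"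
proof (induction rule: G1cas.induct)
  case (gen \<tau>)
  then obtain \<xi> i s where t: "\<tau> = tau1cas \<rho> \<xi> i s" unfolding gens1cas_def by blast
  show ?case
    by (rule exI[of _ "{(\<zeta>, j, n). j = i \<and> n \<in> s \<and> \<zeta> \<in> insert \<xi> (Succ \<rho> \<xi>)}"])
       (auto simp: t tau1cas_def flip_def fun_eq_iff)
next
  case ident
  show ?case by (rule exI[of _ "{}"]) (auto simp: flip_def fun_eq_iff)
next
  case (comp \<pi> \<sigma>) then show ?case using flip_comp by metis
next
  case (inverse \<pi>) then show ?case using flip_inv by metis
qed

lemma act_comp: "act (\<pi> \<circ> \<sigma>) x = act \<pi> (act \<sigma> x)"
proof (induction x)
  case (Name X)
  have "cimage (map_prod (act (\<pi> \<circ> \<sigma>)) (\<pi> \<circ> \<sigma>)) X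
      = cimage (map_prod (act \<pi>) \<pi> \<circ> map_prod (act \<sigma>) \<sigma>) X"
    by (rule cset.map_cong0) (use Name in \<open>fastforce simp: map_prod_def o_def split: prod.splits\<close>)
  then show ?case by (simp add: cset.map_comp[symmetric] del: comp_apply)
qed

lemma act_check: "\<pi> \<in> G1cas \<rho> \<Longrightarrow> act \<pi> (check_nat n) = check_nat n"
proof (induction n)
  case 0 then show ?case by simp
next
  case (Suc n)
  obtain S where S: "\<pi> = flip S" using G1cas_flip[OF Suc.prems] by blast
  have e: "\<pi> one_cond = one_cond" by (simp add: S flip_def one_cond_def fun_eq_iff)
  have "check_nat n = Name (elts (check_nat n))" by simp
  then have "act \<pi> (check_nat n) = Name (cimage (map_prod (act \<pi>) \<pi>) (elts (check_nat n)))"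
    by (metis act.simps)
  then have c: "cimage (map_prod (act \<pi>) \<pi>) (elts (check_nat n)) = elts (check_nat n)"
    using Suc.IH[OF Suc.prems] by (metis name.sel)
  show ?case using Suc.IH[OF Suc.prems] e c by simp
qed

lemma HS_check: "HS \<rho> (check_nat n) \<and> (\<forall>(y, p) \<in> rcset (elts (check_nat n)). p = one_cond \<and> HS \<rho> y)"
proof (induction n)
  case 0
  have sg: "is_subgroup \<rho> (G1cas \<rho>)"
    unfolding is_subgroup_def by (auto intro: G1cas.intros)
  have "{\<pi> \<in> G1cas \<rho>. act \<pi> (check_nat 0) = check_nat 0} = G1cas \<rho>" by auto
  moreover have "G1cas \<rho> \<in> F1cas \<rho>"
    unfolding F1cas_def using sg by (auto intro!: exI[of _ "{}"])
  ultimately have "symmetric_name \<rho> (check_nat 0)" unfolding symmetric_name_def by simp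
  then show ?case by (auto intro: HS.intros simp: bot_cset.rep_eq)
next
  case (Suc n)
  have sg: "is_subgroup \<rho> (G1cas \<rho>)"
    unfolding is_subgroup_def by (auto intro: G1cas.intros)
  have "{\<pi> \<in> G1cas \<rho>. act \<pi> (check_nat (Suc n)) = check_nat (Suc n)} = G1cas \<rho>"
    using act_check by blast
  moreover have "G1cas \<rho> \<in> F1cas \<rho>"
    unfolding F1cas_def using sg by (auto intro!: exI[of _ "{}"])
  ultimately have sy: "symmetric_name \<rho> (check_nat (Suc n))" unfolding symmetric_name_def by simp
  have el: "\<forall>(y, p) \<in> rcset (elts (check_nat (Suc n))). p = one_cond \<and> HS \<rho> y"
    using Suc.IH by (auto simp: cinsert.rep_eq)
  have "HS \<rho> (check_nat (Suc n))"
    by (rule HS.intros[OF sy]) (use el in \<open>auto simp: P1_def one_cond_def\<close>)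
  then show ?case using el by blast
qed

theorem proposition4p3:
  fixes \<rho> :: "'w::wellorder \<Rightarrow> 'w"
    and A :: "'w set"
    and C :: "nat \<Rightarrow> 'w cond set"
  assumes "omega1_like TYPE('w)"
    and "regressive \<rho>"
    and "rank1_scheme \<rho> A C"
  shows "HS \<rho> (scheme_name C) \<and> supported_by \<rho> A (scheme_name C)"
proof -
  define U where "U = (\<Union>m. (\<lambda>r. (check_nat m :: 'w cond name, r)) ` C m)"
  have cU: "countable U" unfolding U_def using assms(3) by (auto simp: rank1_scheme_def)
  have rU: "rcset (acset U) = U" using cU by simp
  have x: "scheme_name C = Name (acset U)" unfolding scheme_name_def U_def by simp
  have AclA: "A \<subseteq> cl_rho \<rho> A" unfolding cl_rho_def by auto
  have sup: "act \<pi> (scheme_name C) = scheme_name C" if \<pi>: "\<pi> \<in> Fix1cas \<rho> A" for \<pi>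
  proof -
    have G: "\<pi> \<in> G1cas \<rho>" and fx: "\<And>p \<zeta> j n. \<zeta> \<in> cl_rho \<rho> A \<Longrightarrow> \<pi> p (\<zeta>, j, n) = p (\<zeta>, j, n)"
      using \<pi> unfolding Fix1cas_def by auto
    obtain S where S: "\<pi> = flip S" using G1cas_flip[OF G] by blast
    have pr: "\<pi> r = r" if "r \<in> C m" for r m
    proof
      fix y :: "'w \<times> nat \<times> nat"
      obtain \<zeta> j n where y: "y = (\<zeta>, j, n)" by (cases y) auto
      show "\<pi> r y = r y"
      proof (cases "\<zeta> \<in> cl_rho \<rho> A")
        case True then show ?thesis using fx y by simp
      next
        case False
        have "node_support r \<subseteq> A" using assms(3) that by (auto simp: rank1_scheme_def)
        then have "r y = None" using False AclA y unfolding node_support_def by blast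
        then show ?thesis by (simp add: S flip_def)
      qed
    qed
    have "cimage (map_prod (act \<pi>) \<pi>) (acset U) = acset U"
    proof -
      have "map_prod (act \<pi>) \<pi> ` U = U"
      proof -
        have "\<forall>u\<in>U. map_prod (act \<pi>) \<pi> u = u"
          unfolding U_def using pr act_check[OF G] by auto
        then show ?thesis by simp
      qed
      then show ?thesis by (metis rU cimage.rep_eq rcset_inverse)
    qed
    then show ?thesis using x by simp
  qed
  have idF: "id \<in> Fix1cas \<rho> A" unfolding Fix1cas_def by (auto intro: G1cas.intros)
  define H where "H = {\<pi> \<in> G1cas \<rho>. act \<pi> (scheme_name C) = scheme_name C}"
  have sg: "is_subgroup \<rho> H"
    unfolding is_subgroup_def H_def
  proof (intro conjI ballI)
    show "id \<in> {\<pi> \<in> G1cas \<rho>. act \<pi> (scheme_name C) = scheme_name C}"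
      using sup[OF idF] by (auto intro: G1cas.intros)
  next
    fix \<pi> \<sigma> assume "\<pi> \<in> {\<pi> \<in> G1cas \<rho>. act \<pi> (scheme_name C) = scheme_name C}"
      "\<sigma> \<in> {\<pi> \<in> G1cas \<rho>. act \<pi> (scheme_name C) = scheme_name C}"
    then show "\<pi> \<circ> \<sigma> \<in> {\<pi> \<in> G1cas \<rho>. act \<pi> (scheme_name C) = scheme_name C}"
      by (auto simp: act_comp intro: G1cas.intros)
  next
    fix \<pi> assume a: "\<pi> \<in> {\<pi> \<in> G1cas \<rho>. act \<pi> (scheme_name C) = scheme_name C}"
    then obtain S where "\<pi> = flip S" using G1cas_flip by blast
    then have "inv \<pi> = \<pi>" using flip_inv by metis
    then show "inv \<pi> \<in> {\<pi> \<in> G1cas \<rho>. act \<pi> (scheme_name C) = scheme_name C}" using a by simp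
  qed auto
  have "H \<in> F1cas \<rho>"
    unfolding F1cas_def using sg assms(3) sup
    by (auto simp: rank1_scheme_def H_def Fix1cas_def intro!: exI[of _ "{A}"])
  then have sy: "symmetric_name \<rho> (scheme_name C)" unfolding symmetric_name_def H_def .
  have el: "\<forall>(y, p) \<in> rcset (elts (scheme_name C)). p \<in> P1 \<and> HS \<rho> y"
    using assms(3) HS_check unfolding x rU U_def
    by (auto simp: rank1_scheme_def exact_packet_def)
  show ?thesis
    using HS.intros[OF sy el] sup unfolding supported_by_def by blast
qed

end
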